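(* Let $G$ be a connected graph with vertex set $\{u_1,\dots,u_m\}$ and $\kappa(G)=\delta(G)>0$, and let $n\ge 3$. Let $S\subseteq V(G\times K_n)$ satisfy: (1) $|S|=(n-1)\delta(G)$; (2) $S_i':=S_i\setminus S\neq\varnothing$ for every $i=1,\dots,m$; (3) $G\times K_n-S$ has no isolated vertex. Then the graph $G^*$ associated with $G$ and $S$ is connected.
   Context: The Kronecker product $G_1\times G_2$ has vertex set $V(G_1)\times V(G_2)$, with $(u_1,v_1)(u_2,v_2)$ an edge iff $u_1u_2\in E(G_1)$ and $v_1v_2\in E(G_2)$. Write $V(K_n)=\{v_1,\dots,v_n\}$ and $S_i=\{u_i\}\times V(K_n)$ for $i=1,\dots,m$. Given $S$ as in the statement, $G^*$ is the graph with vertex set $\{S_1',\dots,S_m'\}$ in which $S_i'S_j'$ is an edge iff $G\times K_n-S$ contains an edge with one end in $S_i'$ and the other in $S_j'$. *)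

theory Defs
  imports Main
begin

definition sgraph :: "'a set \<Rightarrow> ('a \<Rightarrow> 'a \<Rightarrow> bool) \<Rightarrow> bool" where
  "sgraph V E \<longleftrightarrow> finite V \<and> (\<forall>x y. E x y \<longrightarrow> x \<in> V \<and> y \<in> V)
     \<and> (\<forall>x y. E x y \<longrightarrow> E y x) \<and> (\<forall>x. \<not> E x x)"

text \<open>Connectedness of the graph with vertex set V, using only edges inside V
(so that this also applies to vertex-deleted subgraphs). The empty graph is
not connected.\<close>

definition gconnected :: "'a set \<Rightarrow> ('a \<Rightarrow> 'a \<Rightarrow> bool) \<Rightarrow> bool" where
  "gconnected V E \<longleftrightarrow> V \<noteq> {} \<and>
     (\<forall>x\<in>V. \<forall>y\<in>V. (\<lambda>a b. E a b \<and> a \<in> V \<and> b \<in> V)\<^sup>*\<^sup>* x y)"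

definition degree :: "'a set \<Rightarrow> ('a \<Rightarrow> 'a \<Rightarrow> bool) \<Rightarrow> 'a \<Rightarrow> nat" where
  "degree V E v = card {w \<in> V. E v w}"

definition min_degree :: "'a set \<Rightarrow> ('a \<Rightarrow> 'a \<Rightarrow> bool) \<Rightarrow> nat" where
  "min_degree V E = Min (degree V E ` V)"

definition vertex_connectivity :: "'a set \<Rightarrow> ('a \<Rightarrow> 'a \<Rightarrow> bool) \<Rightarrow> nat" where
  "vertex_connectivity V E =
     Min {card X | X. X \<subseteq> V \<and> (\<not> gconnected (V - X) E \<or> card (V - X) \<le> 1)}"

definition Kn_verts :: "nat \<Rightarrow> nat set" where
  "Kn_verts n = {0..<n}"

definition Kn_edge :: "nat \<Rightarrow> nat \<Rightarrow> bool" where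
  "Kn_edge i j \<longleftrightarrow> i \<noteq> j"

definition kron_verts :: "'a set \<Rightarrow> 'b set \<Rightarrow> ('a \<times> 'b) set" where
  "kron_verts V1 V2 = V1 \<times> V2"

definition kron_edge :: "('a \<Rightarrow> 'a \<Rightarrow> bool) \<Rightarrow> ('b \<Rightarrow> 'b \<Rightarrow> bool)
    \<Rightarrow> 'a \<times> 'b \<Rightarrow> 'a \<times> 'b \<Rightarrow> bool" where
  "kron_edge E1 E2 x y \<longleftrightarrow> E1 (fst x) (fst y) \<and> E2 (snd x) (snd y)"

definition no_isolated :: "'a set \<Rightarrow> ('a \<Rightarrow> 'a \<Rightarrow> bool) \<Rightarrow> bool" where
  "no_isolated W E \<longleftrightarrow> (\<forall>x\<in>W. \<exists>y\<in>W. E x y)"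

text \<open>S_i = {u_i} \<times> V(K_n), and S_i' = S_i - S.\<close>

definition layer :: "nat \<Rightarrow> 'a \<Rightarrow> ('a \<times> nat) set" where
  "layer n u = {u} \<times> Kn_verts n"

text \<open>The graph G*: its vertex S_u' is indexed by u \<in> V(G) (distinct u give
distinct, disjoint S_u'); S_u' S_w' is an edge iff G \<times> K_n - S has an edge
with one end in S_u' and the other in S_w'.\<close>

definition gstar_edge :: "nat \<Rightarrow> ('a \<Rightarrow> 'a \<Rightarrow> bool) \<Rightarrow> ('a \<times> nat) set \<Rightarrow> 'a \<Rightarrow> 'a \<Rightarrow> bool" where
  "gstar_edge n E S u w \<longleftrightarrow>
     (\<exists>x \<in> layer n u - S. \<exists>y \<in> layer n w - S. kron_edge E Kn_edge x y)"

end

theory Submission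
  imports Defs
begin

lemma cross_lemma:
  assumes "(\<lambda>a b. E a b \<and> a \<in> W \<and> b \<in> W)\<^sup>*\<^sup>* x y" "x \<in> P" "y \<notin> P"
  shows "\<exists>u w. u \<in> P \<and> w \<notin> P \<and> u \<in> W \<and> w \<in> W \<and> E u w"
  using assms
proof (induction rule: rtranclp_induct)
  case base then show ?case by simp
next
  case (step y z)
  show ?case
  proof (cases "y \<in> P")
    case True then show ?thesis using step by blast
  next
    case False then show ?thesis using step by blast
  qed
qed

lemma sym_rtranclp:
  assumes "\<And>a b. R a b \<Longrightarrow> R b a" "R\<^sup>*\<^sup>* x y"
  shows "R\<^sup>*\<^sup>* y x"
  using assms(2)
proof (induction rule: rtranclp_induct)
  case base then show ?case by simp
next
  case (step y z)
  then show ?case using assms(1) by (meson converse_rtranclp_into_rtranclp)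
qed

lemma key_single:
  assumes "E u w" "\<not> gstar_edge n E S u w" "x \<in> layer n u - S" "y \<in> layer n w - S"
  shows "layer n u - S = {x}"
proof -
  have "x' = x" if "x' \<in> layer n u - S" for x'
  proof (rule ccontr)
    assume ne: "x' \<noteq> x"
    have "fst x = u" "fst x' = u" "fst y = w" using assms(3,4) that by (auto simp: layer_def)
    then have "snd x \<noteq> snd x'" using ne by (metis prod.collapse)
    then have "snd x \<noteq> snd y \<or> snd x' \<noteq> snd y" by auto
    then show False
    proof
      assume "snd x \<noteq> snd y"
      then have "kron_edge E Kn_edge x y" using \<open>fst x = u\<close> \<open>fst y = w\<close> assms(1)
        by (simp add: kron_edge_def Kn_edge_def)
      then show False using assms(2,3,4) unfolding gstar_edge_def by blast
    next
      assume "snd x' \<noteq> snd y"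
      then have "kron_edge E Kn_edge x' y" using \<open>fst x' = u\<close> \<open>fst y = w\<close> assms(1)
        by (simp add: kron_edge_def Kn_edge_def)
      then show False using assms(2,4) that unfolding gstar_edge_def by blast
    qed
  qed
  then show ?thesis using assms(3) by blast
qed

lemma card_layer: "card (layer n u) = n"
  by (simp add: layer_def Kn_verts_def card_cartesian_product)

lemma finite_layer: "finite (layer n u)"
  by (simp add: layer_def Kn_verts_def)

lemma single_card:
  assumes "layer n u - S = {x}"
  shows "card (S \<inter> layer n u) = n - 1"
proof -
  have "card (layer n u - S) = card (layer n u) - card (layer n u \<inter> S)"
    by (rule card_Diff_subset_Int) (simp add: finite_layer)
  then show ?thesis using assms card_layer[of n u] by (simp add: Int_commute)
qed

theorem lemma2p3:
  fixes V :: "'a set" and E :: "'a \<Rightarrow> 'a \<Rightarrow> bool"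
    and n :: nat and S :: "('a \<times> nat) set"
  assumes "sgraph V E"
    and "gconnected V E"
    and "vertex_connectivity V E = min_degree V E"
    and "min_degree V E > 0"
    and "n \<ge> 3"
    and "S \<subseteq> kron_verts V (Kn_verts n)"
    and "card S = (n - 1) * min_degree V E"
    and "\<forall>u\<in>V. layer n u - S \<noteq> {}"
    and "no_isolated (kron_verts V (Kn_verts n) - S) (kron_edge E Kn_edge)"
  shows "gconnected V (gstar_edge n E S)"
proof (rule ccontr)
  assume nc: "\<not> gconnected V (gstar_edge n E S)"
  have finV: "finite V" and Esym: "\<And>x y. E x y \<Longrightarrow> E y x" and Eirr: "\<And>x. \<not> E x x"
    and EV: "\<And>x y. E x y \<Longrightarrow> x \<in> V \<and> y \<in> V"
    using assms(1) unfolding sgraph_def by auto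
  have Vne: "V \<noteq> {}" using assms(2) unfolding gconnected_def by auto
  then obtain v0 where v0: "v0 \<in> V" by auto
  define R where "R = (\<lambda>a b. gstar_edge n E S a b \<and> a \<in> V \<and> b \<in> V)"
  define A where "A = {w \<in> V. R\<^sup>*\<^sup>* v0 w}"
  define \<delta> where "\<delta> = min_degree V E"
  have gsym: "gstar_edge n E S b a" if "gstar_edge n E S a b" for a b
    using that Esym unfolding gstar_edge_def kron_edge_def Kn_edge_def by fastforce
  have Rsym: "R b a" if "R a b" for a b using that gsym unfolding R_def by blast
  have v0A: "v0 \<in> A" unfolding A_def using v0 by simp
  have BA: "V - A \<noteq> {}"
  proof
    assume "V - A = {}"
    then have "\<forall>x\<in>V. R\<^sup>*\<^sup>* v0 x" unfolding A_def by auto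
    then have "\<forall>x\<in>V. \<forall>y\<in>V. R\<^sup>*\<^sup>* x y"
    proof (intro ballI)
      fix x y assume "\<forall>x\<in>V. R\<^sup>*\<^sup>* v0 x" "x \<in> V" "y \<in> V"
      then have "R\<^sup>*\<^sup>* v0 x" "R\<^sup>*\<^sup>* v0 y" by auto
      then have "R\<^sup>*\<^sup>* x v0" using sym_rtranclp[of R] Rsym by blast
      then show "R\<^sup>*\<^sup>* x y" using \<open>R\<^sup>*\<^sup>* v0 y\<close> by (rule rtranclp_trans)
    qed
    then show False using nc Vne unfolding gconnected_def R_def by auto
  qed
  then obtain b0 where b0: "b0 \<in> V - A" by auto
  have "(\<lambda>a b. E a b \<and> a \<in> V \<and> b \<in> V)\<^sup>*\<^sup>* v0 b0"
    using assms(2) v0 b0 unfolding gconnected_def by auto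
  from cross_lemma[OF this v0A] b0 obtain a b where ab: "a \<in> A" "b \<in> V - A" "E a b" by auto
  have AV: "A \<subseteq> V" unfolding A_def by auto
  have nog: "\<not> gstar_edge n E S u w" if "u \<in> A" "w \<in> V - A" for u w
  proof
    assume "gstar_edge n E S u w"
    then have "R u w" using that AV unfolding R_def by auto
    then have "R\<^sup>*\<^sup>* v0 w" using that(1) unfolding A_def by auto
    then show False using that unfolding A_def by auto
  qed
  define D where "D = {u\<in>V. \<exists>w\<in>V. E u w \<and> (u \<in> A \<longleftrightarrow> w \<notin> A)}"
  have Dlay: "card (S \<inter> layer n u) = n - 1" if uD: "u \<in> D" for u
  proof -
    obtain w where w: "w \<in> V" "E u w" "u \<in> A \<longleftrightarrow> w \<notin> A" "u \<in> V" using uD unfolding D_def by blast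
    have ng: "\<not> gstar_edge n E S u w"
      using w nog gsym by blast
    obtain x where x: "x \<in> layer n u - S" using assms(8) w(4) by blast
    obtain y where y: "y \<in> layer n w - S" using assms(8) w(1) by blast
    show ?thesis by (rule single_card[OF key_single[OF w(2) ng x y]])
  qed
  have DV: "D \<subseteq> V" unfolding D_def by auto
  have finD: "finite D" using DV finV finite_subset by blast
  have finS: "finite S"
    using assms(6) finV finite_subset by (auto simp: kron_verts_def Kn_verts_def)
  have "card (\<Union>u\<in>D. S \<inter> layer n u) = (\<Sum>u\<in>D. card (S \<inter> layer n u))"
    by (rule card_UN_disjoint) (auto simp: finD finS layer_def)
  also have "\<dots> = card D * (n - 1)" using Dlay by simp
  finally have c1: "card (\<Union>u\<in>D. S \<inter> layer n u) = card D * (n - 1)" .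
  have "card (\<Union>u\<in>D. S \<inter> layer n u) \<le> card S"
    by (rule card_mono[OF finS]) auto
  then have "(n - 1) * card D \<le> (n - 1) * \<delta>" using c1 assms(7) unfolding \<delta>_def by (simp add: mult.commute)
  then have cardD: "card D \<le> \<delta>" using assms(5) by simp
  have bD: "b \<in> D" using ab EV Esym unfolding D_def by blast
  have aD: "a \<in> D" using ab EV unfolding D_def by blast
  show False
  proof (cases "A \<subseteq> D")
    case True
    have "{w \<in> V. E a w} \<subseteq> D - {a}"
    proof
      fix w assume w: "w \<in> {w \<in> V. E a w}"
      then have "w \<noteq> a" using Eirr by auto
      moreover have "w \<in> D"
      proof (cases "w \<in> A")
        case True then show ?thesis using \<open>A \<subseteq> D\<close> by auto
      next
        case False
        have "E w a" using w Esym by auto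
        then show ?thesis using False w ab AV unfolding D_def by auto
      qed
      ultimately show "w \<in> D - {a}" by auto
    qed
    then have "degree V E a \<le> card (D - {a})"
      unfolding degree_def using finD by (simp add: card_mono)
    also have "\<dots> = card D - 1" using aD finD by simp
    finally have d1: "degree V E a \<le> card D - 1" .
    have "\<delta> \<le> degree V E a" unfolding \<delta>_def min_degree_def
      using finV ab AV by (intro Min_le) auto
    have "card D > 0" using aD finD card_gt_0_iff by blast
    then show False using d1 cardD \<open>\<delta> \<le> degree V E a\<close> by linarith
  next
    case False
    then obtain a' where a': "a' \<in> A" "a' \<notin> D" by auto
    define X where "X = A \<inter> D"
    have ngc: "\<not> gconnected (V - X) E"
    proof
      assume "gconnected (V - X) E"
      moreover have "a' \<in> V - X" "b \<in> V - X" using a' AV ab unfolding X_def by auto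
      ultimately have "(\<lambda>x y. E x y \<and> x \<in> V - X \<and> y \<in> V - X)\<^sup>*\<^sup>* a' b"
        unfolding gconnected_def by auto
      from cross_lemma[OF this, of "A - X"] a' ab obtain u w where
        uw: "u \<in> A - X" "w \<notin> A - X" "u \<in> V - X" "w \<in> V - X" "E u w"
        unfolding X_def by auto
      then have "w \<notin> A" by auto
      then have "u \<in> D" using uw unfolding D_def by auto
      then show False using uw unfolding X_def by auto
    qed
    have XV: "X \<subseteq> V" using AV unfolding X_def by auto
    have "vertex_connectivity V E \<le> card X"
      unfolding vertex_connectivity_def
    proof (rule Min_le)
      show "finite {card X |X. X \<subseteq> V \<and> (\<not> gconnected (V - X) E \<or> card (V - X) \<le> 1)}"
      proof (rule finite_subset[of _ "card ` Pow V"])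
        show "{card X |X. X \<subseteq> V \<and> (\<not> gconnected (V - X) E \<or> card (V - X) \<le> 1)} \<subseteq> card ` Pow V"
          by auto
        show "finite (card ` Pow V)" using finV by simp
      qed
      show "card X \<in> {card X |X. X \<subseteq> V \<and> (\<not> gconnected (V - X) E \<or> card (V - X) \<le> 1)}"
        using XV ngc by auto
    qed
    moreover have "card X < card D"
      using finD bD ab unfolding X_def by (intro psubset_card_mono) auto
    ultimately show False using cardD assms(3) unfolding \<delta>_def by simp
  qed
qed

end
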